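(* Let $n\geq 2$. If $\prec_1,\ldots,\prec_n$ are linear orders on $D_n$ which realize the product order $<$ on $D_n$, then there are linear orders $\prec_1^*,\ldots,\prec_n^*$ on $\mathbb{Q}^n$ extending $\prec_1,\ldots,\prec_n$ respectively which realize the product order on $\mathbb{Q}^n$.
   Context: Fix $n\geq 2$ and a set $D_n\subseteq\mathbb{Q}^n$ which is dense in $\mathbb{Q}^n$ (product topology) and such that no two distinct points of $D_n$ share a common coordinate. The product order: $\mathbf{a}<\mathbf{b}$ iff $a_i\leq b_i$ for all $i$ and $\mathbf{a}\neq\mathbf{b}$. Linear orders $\prec_1,\ldots,\prec_n$ on a set realize a partial order $<$ on it if $<\;=\;\prec_1\cap\cdots\cap\prec_n$. *)

theory Defs
  imports "HOL-Analysis.Analysis"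
begin

definition prod_less :: "rat ^ 'n \<Rightarrow> rat ^ 'n \<Rightarrow> bool" where
  "prod_less a b \<longleftrightarrow> (\<forall>i. a $ i \<le> b $ i) \<and> a \<noteq> b"

definition prod_order_on :: "(rat ^ 'n) set \<Rightarrow> (rat ^ 'n) rel" where
  "prod_order_on A = {(a, b). a \<in> A \<and> b \<in> A \<and> prod_less a b}"

definition lin_order_on :: "'a set \<Rightarrow> 'a rel \<Rightarrow> bool" where
  "lin_order_on A r \<longleftrightarrow> r \<subseteq> A \<times> A \<and> strict_linear_order_on A r"

definition realizes :: "('i \<Rightarrow> 'a rel) \<Rightarrow> 'a rel \<Rightarrow> bool" where
  "realizes R P \<longleftrightarrow> P = (\<Inter>i. R i)"

text \<open>Density in rat^n w.r.t. the product topology (basis: products of open intervals).\<close>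
definition dense_in_Qn :: "(rat ^ 'n) set \<Rightarrow> bool" where
  "dense_in_Qn D \<longleftrightarrow> (\<forall>a b. (\<forall>i. a $ i < b $ i) \<longrightarrow> (\<exists>d\<in>D. \<forall>i. a $ i < d $ i \<and> d $ i < b $ i))"

definition no_common_coord :: "(rat ^ 'n) set \<Rightarrow> bool" where
  "no_common_coord D \<longleftrightarrow> (\<forall>d\<in>D. \<forall>e\<in>D. d \<noteq> e \<longrightarrow> (\<forall>i. d $ i \<noteq> e $ i))"

end

theory Submission
  imports Defs
begin

definition ltv :: "rat ^ 'n \<Rightarrow> rat ^ 'n \<Rightarrow> bool" where
  "ltv x y \<longleftrightarrow> (\<forall>i. x $ i < y $ i)"

lemma ltv_prod_less: "ltv x y \<Longrightarrow> prod_less x y"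
  unfolding ltv_def prod_less_def by (metis less_imp_le order.irrefl)

locale rsetup =
  fixes D :: "(rat ^ ('n::finite)) set" and R :: "'n \<Rightarrow> (rat ^ 'n) rel"
  assumes dense: "dense_in_Qn D" and ncc: "no_common_coord D"
    and lin: "\<forall>i. lin_order_on D (R i)" and real: "realizes R (prod_order_on D)"
begin

lemma R_sub: "(x,y) \<in> R i \<Longrightarrow> x \<in> D \<and> y \<in> D"
  using lin unfolding lin_order_on_def by blast

lemma R_trans: "(x,y) \<in> R i \<Longrightarrow> (y,z) \<in> R i \<Longrightarrow> (x,z) \<in> R i"
  using lin unfolding lin_order_on_def strict_linear_order_on_def trans_def by blast

lemma R_irrefl: "(x,x) \<notin> R i"
  using lin unfolding lin_order_on_def strict_linear_order_on_def irrefl_on_def by blast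

lemma R_total: "x \<in> D \<Longrightarrow> y \<in> D \<Longrightarrow> x \<noteq> y \<Longrightarrow> (x,y) \<in> R i \<or> (y,x) \<in> R i"
  using lin unfolding lin_order_on_def strict_linear_order_on_def total_on_def by blast

lemma R_prod: "x \<in> D \<Longrightarrow> y \<in> D \<Longrightarrow> ltv x y \<Longrightarrow> (x,y) \<in> R i"
proof -
  assume "x \<in> D" "y \<in> D" "ltv x y"
  hence "(x,y) \<in> prod_order_on D" using ltv_prod_less unfolding prod_order_on_def by blast
  thus ?thesis using real unfolding realizes_def by blast
qed

lemma rev_ex:
  assumes "x \<in> D" "y \<in> D" "y $ j < x $ j"
  shows "\<exists>i. (y,x) \<in> R i"
proof -
  have "(x,y) \<notin> prod_order_on D" using assms unfolding prod_order_on_def prod_less_def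
    by (auto simp: not_le)
  then obtain i where "(x,y) \<notin> R i" using real unfolding realizes_def by blast
  moreover have "x \<noteq> y" using assms by auto
  ultimately show ?thesis using R_total assms by blast
qed

lemma no_cross:
  assumes "(b,a) \<in> R i" "(B,A) \<in> R i" "ltv a B" "ltv A b"
  shows False
proof -
  have D: "a \<in> D" "b \<in> D" "A \<in> D" "B \<in> D" using assms(1,2) R_sub by auto
  have "(a,B) \<in> R i" "(A,b) \<in> R i" using R_prod D assms by auto
  hence "(b,b) \<in> R i" using assms R_trans by meson
  thus False using R_irrefl by blast
qed

definition crit where
  "crit j p q \<longleftrightarrow> p \<in> D \<and> q \<in> D \<and> q $ j < p $ j \<and> (\<forall>k. k \<noteq> j \<longrightarrow> p $ k < q $ k)"

lemma box:
  assumes "\<forall>i. l $ i < u $ i" shows "\<exists>d\<in>D. \<forall>i. l$i < d$i \<and> d$i < u$i"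
  using dense assms unfolding dense_in_Qn_def by blast

lemma boxf:
  assumes "\<And>i. l i < u i" obtains d where "d \<in> D" "\<And>i. l i < d$i" "\<And>i. d$i < u i"
  using box[of "\<chi> i. l i" "\<chi> i. u i"] assms by auto

end

lemma bound4:
  fixes p p' q q' :: "rat ^ 'n::finite"
  shows "\<exists>M::rat. \<forall>c. \<bar>p$c\<bar> < M \<and> \<bar>p'$c\<bar> < M \<and> \<bar>q$c\<bar> < M \<and> \<bar>q'$c\<bar> < M"
proof -
  define f where "f = (\<lambda>i. \<bar>p$i\<bar> + \<bar>p'$i\<bar> + \<bar>q$i\<bar> + \<bar>q'$i\<bar>)"
  have "\<forall>c. \<bar>p$c\<bar> < sum f UNIV + 1 \<and> \<bar>p'$c\<bar> < sum f UNIV + 1 \<and> \<bar>q$c\<bar> < sum f UNIV + 1 \<and> \<bar>q'$c\<bar> < sum f UNIV + 1"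
  proof
    fix c
    have "f c \<le> sum f UNIV"
      by (rule member_le_sum) (auto simp: f_def)
    then show "\<bar>p$c\<bar> < sum f UNIV + 1 \<and> \<bar>p'$c\<bar> < sum f UNIV + 1 \<and> \<bar>q$c\<bar> < sum f UNIV + 1 \<and> \<bar>q'$c\<bar> < sum f UNIV + 1"
      unfolding f_def using abs_ge_zero[of "p$c"] abs_ge_zero[of "p'$c"] abs_ge_zero[of "q$c"] abs_ge_zero[of "q'$c"]
      by linarith
  qed
  thus ?thesis by blast
qed


context rsetup
begin

lemma family:
  assumes cp: "crit j p q" and cp': "crit j p' q'"
    and ov: "\<forall>k. k \<noteq> j \<longrightarrow> max (p$k) (p'$k) < min (q$k) (q'$k)"
  shows "\<exists>A B. \<forall>k. k \<noteq> j \<longrightarrow> A k \<in> D \<and> B k \<in> D \<and> B k $ k < A k $ k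
     \<and> (\<forall>m. m \<noteq> j \<longrightarrow> m \<noteq> k \<longrightarrow> ltv (A k) (B m))
     \<and> ltv (A k) q \<and> ltv (A k) q' \<and> ltv p (B k) \<and> ltv p' (B k)"
proof -
  obtain M where M: "\<forall>c. \<bar>p$c\<bar> < M \<and> \<bar>p'$c\<bar> < M \<and> \<bar>q$c\<bar> < M \<and> \<bar>q'$c\<bar> < M"
    using bound4 by blast
  have ex: "\<exists>a b. a \<in> D \<and> b \<in> D \<and> b$k < a$k \<and> (\<forall>m. m\<noteq>k \<longrightarrow> a$m < -M)
     \<and> (\<forall>m. m \<noteq> k \<longrightarrow> M < b$m) \<and> max (p$k) (p'$k) < b$k \<and> a$k < min (q$k) (q'$k)"
    if "k \<noteq> j" for k
  proof -
    define \<alpha> where "\<alpha> = max (p$k) (p'$k)"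
    define \<beta> where "\<beta> = min (q$k) (q'$k)"
    have ab: "\<alpha> < \<beta>" using ov that by (simp add: \<alpha>_def \<beta>_def)
    define mid where "mid = (\<alpha>+\<beta>)/2"
    have m1: "\<alpha> < mid" "mid < \<beta>" using ab by (auto simp: mid_def)
    have la: "\<And>i. (if i = k then mid else -M-1) < (if i = k then \<beta> else -M)" using m1 by simp
    obtain a where a: "a \<in> D" "\<And>i. (if i = k then mid else -M-1) < a$i" "\<And>i. a$i < (if i = k then \<beta> else -M)"
      using boxf[of "\<lambda>i. if i = k then mid else -M-1" "\<lambda>i. if i = k then \<beta> else -M", OF la] by blast
    have lb: "\<And>i. (if i = k then \<alpha> else M) < (if i = k then mid else M+1)" using m1 by simp
    obtain b where b: "b \<in> D" "\<And>i. (if i = k then \<alpha> else M) < b$i" "\<And>i. b$i < (if i = k then mid else M+1)"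
      using boxf[of "\<lambda>i. if i = k then \<alpha> else M" "\<lambda>i. if i = k then mid else M+1", OF lb] by blast
    have "b$k < a$k" using a(2)[of k] b(3)[of k] by simp
    moreover have "\<forall>m. m\<noteq>k \<longrightarrow> a$m < -M"
    proof (intro allI impI)
      fix m assume "m \<noteq> k" then show "a$m < -M" using a(3)[of m] by simp
    qed
    moreover have "\<forall>m. m\<noteq>k \<longrightarrow> M < b$m"
    proof (intro allI impI)
      fix m assume "m \<noteq> k" then show "M < b$m" using b(2)[of m] by simp
    qed
    moreover have "\<alpha> < b$k" using b(2)[of k] by simp
    moreover have "a$k < \<beta>" using a(3)[of k] by simp
    ultimately show ?thesis using a(1) b(1) unfolding \<alpha>_def \<beta>_def by blast
  qed
  have "\<forall>k. \<exists>a b. k \<noteq> j \<longrightarrow> a \<in> D \<and> b \<in> D \<and> b$k < a$k \<and> (\<forall>m. m\<noteq>k \<longrightarrow> a$m < -M)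
     \<and> (\<forall>m. m \<noteq> k \<longrightarrow> M < b$m) \<and> max (p$k) (p'$k) < b$k \<and> a$k < min (q$k) (q'$k)"
    using ex by blast
  then have "\<exists>A. \<forall>k. \<exists>b. k \<noteq> j \<longrightarrow> A k \<in> D \<and> b \<in> D \<and> b$k < A k$k \<and> (\<forall>m. m\<noteq>k \<longrightarrow> A k$m < -M)
     \<and> (\<forall>m. m \<noteq> k \<longrightarrow> M < b$m) \<and> max (p$k) (p'$k) < b$k \<and> A k$k < min (q$k) (q'$k)"
    by (rule choice)
  then obtain A where "\<forall>k. \<exists>b. k \<noteq> j \<longrightarrow> A k \<in> D \<and> b \<in> D \<and> b$k < A k$k \<and> (\<forall>m. m\<noteq>k \<longrightarrow> A k$m < -M)
     \<and> (\<forall>m. m \<noteq> k \<longrightarrow> M < b$m) \<and> max (p$k) (p'$k) < b$k \<and> A k$k < min (q$k) (q'$k)"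
    by blast
  then have "\<exists>B. \<forall>k. k \<noteq> j \<longrightarrow> A k \<in> D \<and> B k \<in> D \<and> B k$k < A k$k \<and> (\<forall>m. m\<noteq>k \<longrightarrow> A k$m < -M)
     \<and> (\<forall>m. m \<noteq> k \<longrightarrow> M < B k$m) \<and> max (p$k) (p'$k) < B k$k \<and> A k$k < min (q$k) (q'$k)"
    by (rule choice)
  then obtain B where AB: "\<forall>k. k \<noteq> j \<longrightarrow> A k \<in> D \<and> B k \<in> D \<and> B k$k < A k$k \<and> (\<forall>m. m\<noteq>k \<longrightarrow> A k$m < -M)
     \<and> (\<forall>m. m \<noteq> k \<longrightarrow> M < B k$m) \<and> max (p$k) (p'$k) < B k$k \<and> A k$k < min (q$k) (q'$k)"
    by blast
  have pq: "p$k < q$k" "p'$k < q'$k" if "k \<noteq> j" for k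
    using cp cp' that unfolding crit_def by auto
  have Mb: "-M < p$c" "-M < p'$c" "q$c < M" "q'$c < M" "p$c < M" "p'$c < M" "-M < q$c" "-M < q'$c" for c
    using M[rule_format, of c] by (auto simp: abs_less_iff)
  show ?thesis
  proof (intro exI allI impI conjI)
    fix k assume k: "k \<noteq> j"
    note ABk = AB[rule_format, OF k]
    have a1: "\<And>m. m \<noteq> k \<Longrightarrow> A k$m < -M" and b1: "\<And>m. m \<noteq> k \<Longrightarrow> M < B k$m"
      and c1: "p$k < B k$k" "p'$k < B k$k" and d1: "A k$k < q$k" "A k$k < q'$k"
      using ABk by auto
    show "A k \<in> D" "B k \<in> D" "B k $ k < A k $ k" using ABk by auto
    show "ltv (A k) (B m)" if "m \<noteq> j" "m \<noteq> k" for m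
      unfolding ltv_def
    proof
      fix i
      note ABm = AB[rule_format, OF that(1)]
      have b2: "\<And>c. c \<noteq> m \<Longrightarrow> M < B m$c" and c2: "p$m < B m$m"
        using ABm by auto
      show "A k $ i < B m $ i"
      proof (cases "i = k")
        case True
        then show ?thesis using d1(1) b2[of k] that(2) Mb(3)[of k] by auto
      next
        case False
        note F = False
        show ?thesis
        proof (cases "i = m")
          case True
          then show ?thesis using a1[of m] F c2 Mb(1)[of m] by auto
        next
          case False
          then show ?thesis using a1[of i] b2[of i] F Mb(1)[of i] Mb(5)[of i] by auto
        qed
      qed
    qed
    show "ltv (A k) q" unfolding ltv_def
      using a1 d1 Mb(7) by (metis less_trans)
    show "ltv (A k) q'" unfolding ltv_def
      using a1 d1 Mb(8) by (metis less_trans)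
    show "ltv p (B k)" unfolding ltv_def
      using b1 c1 Mb(5) by (metis less_trans)
    show "ltv p' (B k)" unfolding ltv_def
      using b1 c1 Mb(6) by (metis less_trans)
  qed
qed
end


context rsetup
begin

lemma unique_rev:
  assumes cp: "crit j p q" and cp': "crit j p' q'"
    and ov: "\<forall>k. k \<noteq> j \<longrightarrow> max (p$k) (p'$k) < min (q$k) (q'$k)"
    and r1: "(q,p) \<in> R i" and r2: "(q',p') \<in> R i'"
  shows "i = i'"
proof (rule ccontr)
  assume ne: "i \<noteq> i'"
  obtain A B where AB: "\<forall>k. k \<noteq> j \<longrightarrow> A k \<in> D \<and> B k \<in> D \<and> B k $ k < A k $ k
     \<and> (\<forall>m. m \<noteq> j \<longrightarrow> m \<noteq> k \<longrightarrow> ltv (A k) (B m))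
     \<and> ltv (A k) q \<and> ltv (A k) q' \<and> ltv p (B k) \<and> ltv p' (B k)"
    using family[OF cp cp' ov] by blast
  have "\<forall>k. \<exists>r. k \<noteq> j \<longrightarrow> (B k, A k) \<in> R r"
    using AB rev_ex by blast
  then obtain \<rho> where \<rho>: "\<forall>k. k \<noteq> j \<longrightarrow> (B k, A k) \<in> R (\<rho> k)"
    by (metis choice)
  have inj: "inj_on \<rho> (UNIV - {j})"
  proof (rule inj_onI)
    fix k m assume k: "k \<in> UNIV - {j}" and m: "m \<in> UNIV - {j}" and eq: "\<rho> k = \<rho> m"
    show "k = m"
    proof (rule ccontr)
      assume "k \<noteq> m"
      moreover have "(B k, A k) \<in> R (\<rho> k)" "(B m, A m) \<in> R (\<rho> k)" using \<rho> k m eq by auto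
      ultimately show False using no_cross[of "B k" "A k" "\<rho> k" "B m" "A m"] AB k m by auto
    qed
  qed
  have ni: "i \<notin> \<rho> ` (UNIV - {j})"
  proof
    assume "i \<in> \<rho> ` (UNIV - {j})"
    then obtain k where k: "k \<noteq> j" "i = \<rho> k" by auto
    then have "(B k, A k) \<in> R i" using \<rho> by auto
    then show False using no_cross[of q p i "B k" "A k"] r1 AB k by auto
  qed
  have ni': "i' \<notin> \<rho> ` (UNIV - {j})"
  proof
    assume "i' \<in> \<rho> ` (UNIV - {j})"
    then obtain k where k: "k \<noteq> j" "i' = \<rho> k" by auto
    then have "(B k, A k) \<in> R i'" using \<rho> by auto
    then show False using no_cross[of q' p' i' "B k" "A k"] r2 AB k by auto
  qed
  have c1: "card (\<rho> ` (UNIV - {j})) = CARD('n) - 1"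
    using card_image[OF inj] by (simp add: card_Diff_singleton)
  have c0: "CARD('n) \<ge> 1" by (simp add: Suc_leI)
  have "card (insert i (insert i' (\<rho> ` (UNIV - {j})))) = CARD('n) + 1"
    using c1 c0 ni ni' ne by simp
  moreover have "card (insert i (insert i' (\<rho> ` (UNIV - {j})))) \<le> CARD('n)"
    by (rule card_mono) auto
  ultimately show False by simp
qed

lemma key:
  assumes cp: "crit j p q" and r: "(q,p) \<in> R i" and dD: "d \<in> D" and eD: "e \<in> D" and ed: "e$j < d$j"
  shows "(e,d) \<in> R i"
proof -
  define mid where "mid = (e$j + d$j)/2"
  have m1: "e$j < mid" "mid < d$j" using ed by (auto simp: mid_def)
  have la: "\<And>k. (if k = j then mid else min (d$k) (p$k) - 1) < (if k = j then d$j else min (d$k) (p$k))"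
    using m1 by (simp add: min_def)
  obtain a where a: "a \<in> D" "\<And>k. (if k = j then mid else min (d$k) (p$k) - 1) < a$k"
      "\<And>k. a$k < (if k = j then d$j else min (d$k) (p$k))"
    using boxf[of "\<lambda>k. if k = j then mid else min (d$k) (p$k) - 1" "\<lambda>k. if k = j then d$j else min (d$k) (p$k)", OF la] by blast
  have lb: "\<And>k. (if k = j then e$j else max (e$k) (q$k)) < (if k = j then mid else max (e$k) (q$k) + 1)"
    using m1 by (simp add: max_def)
  obtain b where b: "b \<in> D" "\<And>k. (if k = j then e$j else max (e$k) (q$k)) < b$k"
      "\<And>k. b$k < (if k = j then mid else max (e$k) (q$k) + 1)"
    using boxf[of "\<lambda>k. if k = j then e$j else max (e$k) (q$k)" "\<lambda>k. if k = j then mid else max (e$k) (q$k) + 1", OF lb] by blast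
  have aj: "mid < a$j" "a$j < d$j" using a(2)[of j] a(3)[of j] by auto
  have bj: "e$j < b$j" "b$j < mid" using b(2)[of j] b(3)[of j] by auto
  have ak: "a$k < d$k" "a$k < p$k" if "k \<noteq> j" for k using a(3)[of k] that by auto
  have bk: "e$k < b$k" "q$k < b$k" if "k \<noteq> j" for k using b(2)[of k] that by auto
  have pq: "p$k < q$k" if "k \<noteq> j" for k using cp that unfolding crit_def by auto
  have cab: "crit j a b" unfolding crit_def
  proof (intro conjI allI impI)
    fix k assume k: "k \<noteq> j"
    show "a$k < b$k" using ak(2)[OF k] bk(2)[OF k] pq[OF k] by simp
  qed (use a(1) b(1) aj bj in auto)
  have ov: "\<forall>k. k \<noteq> j \<longrightarrow> max (a$k) (p$k) < min (b$k) (q$k)"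
  proof (intro allI impI)
    fix k assume k: "k \<noteq> j"
    show "max (a$k) (p$k) < min (b$k) (q$k)"
      using ak(2)[OF k] bk(2)[OF k] pq[OF k] by (simp add: max_def min_def)
  qed
  obtain i' where i': "(b,a) \<in> R i'" using rev_ex[of a b j] a(1) b(1) aj bj by auto
  have "i' = i" using unique_rev[OF cab cp ov i' r] .
  hence ba: "(b,a) \<in> R i" using i' by simp
  have "ltv e b" unfolding ltv_def
  proof
    fix k show "e$k < b$k" using bj bk[of k] by (cases "k = j") auto
  qed
  hence eb: "(e,b) \<in> R i" using R_prod eD b(1) by blast
  have "ltv a d" unfolding ltv_def
  proof
    fix k show "a$k < d$k" using aj ak[of k] by (cases "k = j") auto
  qed
  hence ad: "(a,d) \<in> R i" using R_prod dD a(1) by blast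
  show ?thesis using R_trans[OF R_trans[OF eb ba] ad] .
qed

end


context rsetup
begin

lemma crit_ex: "\<exists>p q i. crit j p q \<and> (q,p) \<in> R i"
proof -
  have la: "\<And>k. (if k = j then 1 else 0) < (if k = j then 2 else (1::rat))" by simp
  obtain p where p: "p \<in> D" "\<And>k. (if k = j then 1 else 0) < p$k" "\<And>k. p$k < (if k = j then 2 else 1)"
    using boxf[of "\<lambda>k. if k = j then 1 else 0" "\<lambda>k. if k = j then 2 else 1", OF la] by blast
  have lb: "\<And>k. (if k = j then 0 else 1) < (if k = j then 1 else (2::rat))" by simp
  obtain q where q: "q \<in> D" "\<And>k. (if k = j then 0 else 1) < q$k" "\<And>k. q$k < (if k = j then 1 else 2)"
    using boxf[of "\<lambda>k. if k = j then 0 else 1" "\<lambda>k. if k = j then 1 else 2", OF lb] by blast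
  have qp: "q$j < p$j" using p(2)[of j] q(3)[of j] by simp
  have "p$k < q$k" if "k \<noteq> j" for k using p(3)[of k] q(2)[of k] that by simp
  hence c: "crit j p q" unfolding crit_def using p(1) q(1) qp by blast
  obtain i where "(q,p) \<in> R i" using rev_ex[OF p(1) q(1) qp] by blast
  thus ?thesis using c by blast
qed

lemma charact: "\<exists>c::'n\<Rightarrow>'n. surj c \<and> (\<forall>i d e. (d,e) \<in> R i \<longleftrightarrow> d \<in> D \<and> e \<in> D \<and> d$(c i) < e$(c i))"
proof -
  have "\<forall>j. \<exists>i. \<exists>p q. crit j p q \<and> (q,p) \<in> R i" using crit_ex by blast
  then obtain \<rho> where \<rho>: "\<forall>j. \<exists>p q. crit j p q \<and> (q,p) \<in> R (\<rho> j)" by (metis choice)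
  have K: "(e,d) \<in> R (\<rho> j)" if "d \<in> D" "e \<in> D" "e$j < d$j" for j d e
    using key \<rho> that by blast
  have K2: "(d,e) \<in> R (\<rho> j) \<longleftrightarrow> d \<in> D \<and> e \<in> D \<and> d$j < e$j" for j d e
  proof
    assume de: "(d,e) \<in> R (\<rho> j)"
    hence D: "d \<in> D" "e \<in> D" using R_sub by auto
    have "d \<noteq> e" using de R_irrefl by blast
    hence "d$j \<noteq> e$j" using ncc D unfolding no_common_coord_def by blast
    moreover have "\<not> e$j < d$j"
    proof
      assume "e$j < d$j"
      hence "(e,d) \<in> R (\<rho> j)" using K D by blast
      hence "(d,d) \<in> R (\<rho> j)" using R_trans de by blast
      thus False using R_irrefl by blast
    qed
    ultimately show "d \<in> D \<and> e \<in> D \<and> d$j < e$j" using D by auto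
  next
    assume "d \<in> D \<and> e \<in> D \<and> d$j < e$j"
    thus "(d,e) \<in> R (\<rho> j)" using K by blast
  qed
  have inj: "inj \<rho>"
  proof (rule injI, rule ccontr)
    fix j k assume eq: "\<rho> j = \<rho> k" and ne: "j \<noteq> k"
    have la: "\<And>m. (if m = k then 1 else 0) < (if m = k then 2 else (1::rat))" by simp
    obtain x where x: "x \<in> D" "\<And>m. (if m = k then 1 else 0) < x$m" "\<And>m. x$m < (if m = k then 2 else 1)"
      using boxf[of "\<lambda>m. if m = k then 1 else 0" "\<lambda>m. if m = k then 2 else 1", OF la] by blast
    have lb: "\<And>m. (if m = k then 0 else 1) < (if m = k then 1 else (2::rat))" by simp
    obtain y where y: "y \<in> D" "\<And>m. (if m = k then 0 else 1) < y$m" "\<And>m. y$m < (if m = k then 1 else 2)"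
      using boxf[of "\<lambda>m. if m = k then 0 else 1" "\<lambda>m. if m = k then 1 else 2", OF lb] by blast
    have "x$j < y$j" using x(3)[of j] y(2)[of j] ne by simp
    hence "(x,y) \<in> R (\<rho> j)" using K2 x(1) y(1) by blast
    moreover have "y$k < x$k" using x(2)[of k] y(3)[of k] by simp
    hence "(y,x) \<in> R (\<rho> k)" using K2 x(1) y(1) by blast
    ultimately have "(x,x) \<in> R (\<rho> j)" using eq R_trans by metis
    thus False using R_irrefl by blast
  qed
  have surj: "surj \<rho>" by (rule finite_UNIV_inj_surj[OF _ inj]) simp
  define c where "c = inv \<rho>"
  have rc: "\<rho> (c i) = i" for i unfolding c_def using surj by (simp add: surj_f_inv_f)
  have "surj c" unfolding c_def using inj by (metis inv_f_f surjI)
  moreover have "(d,e) \<in> R i \<longleftrightarrow> d \<in> D \<and> e \<in> D \<and> d$(c i) < e$(c i)" for i d e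
    using K2[of d e "c i"] rc[of i] by simp
  ultimately show ?thesis by blast
qed

end

theorem lemma6p4:
  fixes D :: "(rat ^ 'n) set" and R :: "'n \<Rightarrow> (rat ^ 'n) rel"
  assumes "CARD('n) \<ge> 2"
    and "dense_in_Qn D"
    and "no_common_coord D"
    and "\<forall>i. lin_order_on D (R i)"
    and "realizes R (prod_order_on D)"
  shows "\<exists>S :: 'n \<Rightarrow> (rat ^ 'n) rel.
           (\<forall>i. lin_order_on UNIV (S i) \<and> S i \<inter> (D \<times> D) = R i)
           \<and> realizes S (prod_order_on UNIV)"
proof -
  interpret rsetup D R using assms(2-5) by unfold_locales
  obtain c :: "'n \<Rightarrow> 'n" where sc: "surj c"
    and Rc: "\<And>i d e. (d,e) \<in> R i \<longleftrightarrow> d \<in> D \<and> e \<in> D \<and> d$(c i) < e$(c i)"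
    using charact by blast
  define sm :: "rat ^ 'n \<Rightarrow> rat" where "sm x = (\<Sum>k\<in>UNIV. x$k)" for x
  define S where "S i = {(x,y). x$(c i) < y$(c i) \<or> (x$(c i) = y$(c i) \<and> (sm x < sm y \<or> (sm x = sm y \<and> to_nat x < to_nat y)))}" for i
  have irr: "(x,x) \<notin> S i" for x i unfolding S_def by auto
  have lin: "lin_order_on UNIV (S i)" for i
    unfolding lin_order_on_def strict_linear_order_on_def
  proof (intro conjI)
    show "S i \<subseteq> UNIV \<times> UNIV" by simp
    show "trans (S i)" unfolding trans_def S_def by auto
    show "irrefl (S i)" unfolding irrefl_def using irr by blast
    show "total_on UNIV (S i)" unfolding total_on_def S_def
      by (auto simp: not_less_iff_gr_or_eq)
  qed
  have restr: "S i \<inter> (D \<times> D) = R i" for i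
  proof (intro set_eqI iffI)
    fix z assume z: "z \<in> S i \<inter> (D \<times> D)"
    obtain d e where de: "z = (d,e)" by (cases z)
    have D: "d \<in> D" "e \<in> D" using z de by auto
    have "d \<noteq> e" using z de irr by blast
    hence "d$(c i) \<noteq> e$(c i)" using assms(3) D unfolding no_common_coord_def by blast
    hence "d$(c i) < e$(c i)" using z de unfolding S_def by auto
    thus "z \<in> R i" using de D Rc by blast
  next
    fix z assume z: "z \<in> R i"
    obtain d e where de: "z = (d,e)" by (cases z)
    thus "z \<in> S i \<inter> (D \<times> D)" using z Rc unfolding S_def by auto
  qed
  have real: "prod_order_on UNIV = (\<Inter>i. S i)"
  proof (intro set_eqI iffI)
    fix z :: "(rat ^ 'n) \<times> (rat ^ 'n)" assume z: "z \<in> prod_order_on UNIV"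
    obtain x y where xy: "z = (x,y)" by (cases z)
    have le: "\<forall>k\<in>UNIV. x$k \<le> y$k" and ne: "x \<noteq> y" using z xy unfolding prod_order_on_def prod_less_def by auto
    obtain k where "x$k \<noteq> y$k" using ne by (metis vec_eq_iff)
    hence "\<exists>k\<in>UNIV. x$k < y$k" using le by (metis UNIV_I order_le_neq_trans)
    hence "sm x < sm y" unfolding sm_def using le by (intro sum_strict_mono_ex1) auto
    hence "(x,y) \<in> S i" for i using le unfolding S_def by (auto simp: order_le_less)
    thus "z \<in> (\<Inter>i. S i)" using xy by auto
  next
    fix z assume z: "z \<in> (\<Inter>i. S i)"
    obtain x y where xy: "z = (x,y)" by (cases z)
    have "x$k \<le> y$k" for k
    proof -
      obtain i where "c i = k" using sc by (metis surjD)
      moreover have "(x,y) \<in> S i" using z xy by auto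
      ultimately show ?thesis unfolding S_def by auto
    qed
    moreover have "x \<noteq> y" using z xy irr by blast
    ultimately show "z \<in> prod_order_on UNIV" using xy unfolding prod_order_on_def prod_less_def by auto
  qed
  show ?thesis
    by (rule exI[of _ S]) (use lin restr real in \<open>auto simp: realizes_def\<close>)
qed

end
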